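(* Let $E:[0,\infty)\times\mathbb{R}^2\to\mathbb{R}^2$ and $b:[0,\infty)\times\mathbb{R}^2\to\mathbb{R}$ be continuous with $b$ nowhere vanishing, $B=b\,e_3$. Fix $\Delta t>0$, $T>0$, $t^n=n\Delta t$, $N_T=\lfloor T/\Delta t\rfloor$. For each $\varepsilon>0$ let $(x^n_\varepsilon,v^n_\varepsilon)_{0\le n\le N_T}$ be generated (dropping the index $\varepsilon$ inside stages) by: given $(x^n,v^n)$, find $(x^{(1)},v^{(1)})$ and $(x^{(2)},v^{(2)})$ with $$x^{(1)}=x^n+\frac{\Delta t}{2\varepsilon}v^{(1)},\qquad v^{(1)}=v^n+\frac{\Delta t}{2\varepsilon}\Big[\frac{v^{(1)}}{\varepsilon}\wedge B(t^n,x^n)+E(t^n,x^n)\Big],$$ $$x^{(2)}=x^n+\frac{\Delta t}{2\varepsilon}v^{(2)},\qquad v^{(2)}=v^n+\frac{\Delta t}{2\varepsilon}\Big[\frac{v^{(2)}}{\varepsilon}\wedge B(t^{n+1},2x^{(1)}-x^n)+E(t^{n+1},2x^{(1)}-x^n)\Big],$$ and set $x^{n+1}=x^{(1)}+x^{(2)}-x^n$, $v^{n+1}=v^{(1)}+v^{(2)}-v^n$. Assume that for every $1\le n\le N_T$ the family $(x^n_\varepsilon,\varepsilon v^n_\varepsilon)_{\varepsilon>0}$ is bounded uniformly in $\varepsilon$ and that $(x^0_\varepsilon,\varepsilon v^0_\varepsilon)\to(y^0,0)$ as $\varepsilon\to0$. Then for every $0\le n\le N_T$, $x^n_\varepsilon\to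 y^n$ as $\varepsilon\to0$, where $(y^n)$ starts from $y^0$ and satisfies $$y^{(1)}=y^n+\frac{\Delta t}{2}U(t^n,y^n),\qquad y^{(2)}=y^n+\frac{\Delta t}{2}U(t^{n+1},2y^{(1)}-y^n),\qquad y^{n+1}=y^{(1)}+y^{(2)}-y^n.$$
   Context: Vectors of $\mathbb{R}^2$ are identified with vectors $(w_1,w_2,0)$ of $\mathbb{R}^3$, $e_3=(0,0,1)$, and $\wedge$ is the cross product; thus for $w\in\mathbb{R}^2$ and $B=b\,e_3$, $w\wedge B=b\,(w_2,-w_1)\in\mathbb{R}^2$. The guiding-center drift is $U(t,x)=\dfrac{E(t,x)\wedge B(t,x)}{\|B(t,x)\|^2}$. *)

theory Defs
  imports "HOL-Analysis.Analysis"
begin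

text \<open>Planar vectors are real^2 with components w$1, w$2. For B = b e3,
  w wedge B = b (w2, -w1).\<close>
definition wedgeB :: "real^2 \<Rightarrow> real \<Rightarrow> real^2" where
  "wedgeB w b = (\<chi> i. if i = 1 then b * w$2 else - (b * w$1))"

text \<open>Guiding-centre drift U = (E wedge B)/|B|^2 with |B|^2 = b^2.\<close>
definition drift :: "(real \<Rightarrow> real^2 \<Rightarrow> real^2) \<Rightarrow> (real \<Rightarrow> real^2 \<Rightarrow> real)
    \<Rightarrow> real \<Rightarrow> real^2 \<Rightarrow> real^2" where
  "drift E b t x = (1 / (b t x)^2) *\<^sub>R wedgeB (E t x) (b t x)"

end

theory Submission
  imports Defs
begin

lemma solve_comp:
  fixes s h be p0 q0 e1 e2 P Q :: real
  assumes s: "s > 0" and h: "h > 0" and bz: "be \<noteq> 0"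
    and eq1: "P = p0 + (h/s) * (be * (Q/s) + e1)"
    and eq2: "Q = q0 + (h/s) * (- (be * (P/s)) + e2)"
  shows "P = (s^3 * (s*p0 + h*e1) + s*be*h*(s*q0 + h*e2)) / (s^4 + h^2*be^2)"
    and "Q = (s^3 * (s*q0 + h*e2) - s*be*h*(s*p0 + h*e1)) / (s^4 + h^2*be^2)"
proof -
  have d: "s^4 + h^2*be^2 > 0" using s by (simp add: add_pos_nonneg)
  have e1': "s^2 * P = s^2*p0 + h*be*Q + s*h*e1" using eq1 s by (simp add: field_simps power2_eq_square)
  have e2': "s^2 * Q = s^2*q0 - h*be*P + s*h*e2" using eq2 s by (simp add: field_simps power2_eq_square)
  have "P * (s^4 + h^2*be^2) = s^3 * (s*p0 + h*e1) + s*be*h*(s*q0 + h*e2)"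
  proof -
    have "s^4 * P = s^2 * (s^2*P)" by (simp add: power_numeral_reduce)
    also have "\<dots> = s^4*p0 + h*be*(s^2*Q) + s^3*h*e1" unfolding e1' by (simp add: algebra_simps power_numeral_reduce)
    finally show ?thesis unfolding e2' by (simp add: algebra_simps power_numeral_reduce power2_eq_square)
  qed
  thus "P = (s^3 * (s*p0 + h*e1) + s*be*h*(s*q0 + h*e2)) / (s^4 + h^2*be^2)"
    using d by (simp add: field_simps)
  have "Q * (s^4 + h^2*be^2) = s^3 * (s*q0 + h*e2) - s*be*h*(s*p0 + h*e1)"
  proof -
    have "s^4 * Q = s^2 * (s^2*Q)" by (simp add: power_numeral_reduce)
    also have "\<dots> = s^4*q0 - h*be*(s^2*P) + s^3*h*e2" unfolding e2' by (simp add: algebra_simps power_numeral_reduce)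
    finally show ?thesis unfolding e1' by (simp add: algebra_simps power_numeral_reduce power2_eq_square)
  qed
  thus "Q = (s^3 * (s*q0 + h*e2) - s*be*h*(s*p0 + h*e1)) / (s^4 + h^2*be^2)"
    using d by (simp add: field_simps)
qed

lemma stage_limit:
  fixes V V1 e :: "real \<Rightarrow> real^2" and be :: "real \<Rightarrow> real"
  assumes h: "h > 0"
    and eq: "eventually (\<lambda>s. V1 s = V s + (h/s) *\<^sub>R (wedgeB ((1/s) *\<^sub>R V1 s) (be s) + e s)) (at_right 0)"
    and lb: "(be \<longlongrightarrow> b0) (at_right 0)" and b0: "b0 \<noteq> 0"
    and le: "(e \<longlongrightarrow> e0) (at_right 0)"
    and lv: "((\<lambda>s. s *\<^sub>R V s) \<longlongrightarrow> 0) (at_right 0)"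
  shows "((\<lambda>s. (h/s) *\<^sub>R V1 s) \<longlongrightarrow> h *\<^sub>R ((1 / b0^2) *\<^sub>R wedgeB e0 b0)) (at_right 0)"
    and "((\<lambda>s. s *\<^sub>R V1 s) \<longlongrightarrow> 0) (at_right 0)"
proof -
  define F :: "real filter" where "F = at_right 0"
  have pos: "eventually (\<lambda>s. s > 0) F" unfolding F_def by (simp add: eventually_at_filter)
  have bnz: "eventually (\<lambda>s. be s \<noteq> 0) F"
    using lb b0 unfolding F_def by (simp add: tendsto_imp_eventually_ne)
  have s0: "((\<lambda>s. s) \<longlongrightarrow> 0) F" unfolding F_def by (rule tendsto_ident_at)
  have lvc: "((\<lambda>s. s * V s $ i) \<longlongrightarrow> 0) F" for i
    using tendsto_vec_nth[OF lv[folded F_def], of i] by simp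
  have lec: "((\<lambda>s. e s $ i) \<longlongrightarrow> e0 $ i) F" for i
    using tendsto_vec_nth[OF le[folded F_def], of i] by simp
  note lb' = lb[folded F_def]
  define D where "D s = s^4 + h^2*(be s)^2" for s
  have lD: "(D \<longlongrightarrow> 0^4 + h^2*b0^2) F" unfolding D_def
    by (intro tendsto_intros s0 lb')
  have Dpos: "eventually (\<lambda>s. D s > 0) F" using pos unfolding D_def
    by eventually_elim (simp add: add_pos_nonneg)
  have D0: "0^4 + h^2*b0^2 \<noteq> (0::real)" using h b0 by simp
  have comps: "eventually (\<lambda>s. V1 s $ 1 = (s^3 * (s*V s$1 + h*e s$1) + s*be s*h*(s*V s$2 + h*e s$2)) / D s
      \<and> V1 s $ 2 = (s^3 * (s*V s$2 + h*e s$2) - s*be s*h*(s*V s$1 + h*e s$1)) / D s) F"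
    using eventually_conj[OF eventually_conj[OF pos bnz] eq[folded F_def]]
  proof (rule eventually_mono)
    fix s assume a: "(0 < s \<and> be s \<noteq> 0) \<and> V1 s = V s + (h/s) *\<^sub>R (wedgeB ((1/s) *\<^sub>R V1 s) (be s) + e s)"
    have q1: "V1 s $ 1 = V s $ 1 + (h/s) * (be s * (V1 s $ 2 / s) + e s $ 1)"
      using arg_cong[OF conjunct2[OF a], of "\<lambda>w. w $ 1"] by (simp add: wedgeB_def)
    have q2: "V1 s $ 2 = V s $ 2 + (h/s) * (- (be s * (V1 s $ 1 / s)) + e s $ 2)"
      using arg_cong[OF conjunct2[OF a], of "\<lambda>w. w $ 2"] by (simp add: wedgeB_def)
    show "V1 s $ 1 = (s^3 * (s*V s$1 + h*e s$1) + s*be s*h*(s*V s$2 + h*e s$2)) / D s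
      \<and> V1 s $ 2 = (s^3 * (s*V s$2 + h*e s$2) - s*be s*h*(s*V s$1 + h*e s$1)) / D s"
      unfolding D_def using solve_comp[OF _ h _ q1 q2] a by auto
  qed
  show "((\<lambda>s. (h/s) *\<^sub>R V1 s) \<longlongrightarrow> h *\<^sub>R ((1 / b0^2) *\<^sub>R wedgeB e0 b0)) (at_right 0)"
    unfolding F_def[symmetric]
  proof (rule vec_tendstoI)
    fix i :: 2
    have L1: "((\<lambda>s. h * ((s^2 * (s*V s$1 + h*e s$1) + be s*h*(s*V s$2 + h*e s$2)) / D s)) \<longlongrightarrow>
        h * ((0^2 * (0 + h*e0$1) + b0*h*(0 + h*e0$2)) / (0^4 + h^2*b0^2))) F"
      by (intro tendsto_intros s0 lb' lvc lec lD D0)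
    have L2: "((\<lambda>s. h * ((s^2 * (s*V s$2 + h*e s$2) - be s*h*(s*V s$1 + h*e s$1)) / D s)) \<longlongrightarrow>
        h * ((0^2 * (0 + h*e0$2) - b0*h*(0 + h*e0$1)) / (0^4 + h^2*b0^2))) F"
      by (intro tendsto_intros s0 lb' lvc lec lD D0)
    have ev1: "eventually (\<lambda>s. h * ((s^2 * (s*V s$1 + h*e s$1) + be s*h*(s*V s$2 + h*e s$2)) / D s) = ((h/s) *\<^sub>R V1 s) $ 1) F"
      using eventually_conj[OF eventually_conj[OF pos Dpos] comps] by eventually_elim (simp add: field_simps power_numeral_reduce)
    have ev2: "eventually (\<lambda>s. h * ((s^2 * (s*V s$2 + h*e s$2) - be s*h*(s*V s$1 + h*e s$1)) / D s) = ((h/s) *\<^sub>R V1 s) $ 2) F"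
      using eventually_conj[OF eventually_conj[OF pos Dpos] comps] by eventually_elim (simp add: field_simps power_numeral_reduce)
    have r1: "h * ((0^2 * (0 + h*e0$1) + b0*h*(0 + h*e0$2)) / (0^4 + h^2*b0^2)) = (h *\<^sub>R ((1 / b0^2) *\<^sub>R wedgeB e0 b0)) $ 1"
      using h b0 by (simp add: wedgeB_def field_simps power2_eq_square)
    have r2: "h * ((0^2 * (0 + h*e0$2) - b0*h*(0 + h*e0$1)) / (0^4 + h^2*b0^2)) = (h *\<^sub>R ((1 / b0^2) *\<^sub>R wedgeB e0 b0)) $ 2"
      using h b0 by (simp add: wedgeB_def field_simps power2_eq_square)
    have "((\<lambda>s. ((h/s) *\<^sub>R V1 s) $ 1) \<longlongrightarrow> (h *\<^sub>R ((1 / b0^2) *\<^sub>R wedgeB e0 b0)) $ 1) F"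
      using tendsto_cong[OF ev1] L1 r1 by simp
    moreover have "((\<lambda>s. ((h/s) *\<^sub>R V1 s) $ 2) \<longlongrightarrow> (h *\<^sub>R ((1 / b0^2) *\<^sub>R wedgeB e0 b0)) $ 2) F"
      using tendsto_cong[OF ev2] L2 r2 by simp
    ultimately show "((\<lambda>s. ((h/s) *\<^sub>R V1 s) $ i) \<longlongrightarrow> (h *\<^sub>R ((1 / b0^2) *\<^sub>R wedgeB e0 b0)) $ i) F"
      using exhaust_2[of i] by auto
  qed
  show "((\<lambda>s. s *\<^sub>R V1 s) \<longlongrightarrow> 0) (at_right 0)"
    unfolding F_def[symmetric]
  proof (rule vec_tendstoI)
    fix i :: 2
    have L1: "((\<lambda>s. (s^4 * (s*V s$1 + h*e s$1) + s^2*be s*h*(s*V s$2 + h*e s$2)) / D s) \<longlongrightarrow>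
        (0^4 * (0 + h*e0$1) + 0^2*b0*h*(0 + h*e0$2)) / (0^4 + h^2*b0^2)) F"
      by (intro tendsto_intros s0 lb' lvc lec lD D0)
    have L2: "((\<lambda>s. (s^4 * (s*V s$2 + h*e s$2) - s^2*be s*h*(s*V s$1 + h*e s$1)) / D s) \<longlongrightarrow>
        (0^4 * (0 + h*e0$2) - 0^2*b0*h*(0 + h*e0$1)) / (0^4 + h^2*b0^2)) F"
      by (intro tendsto_intros s0 lb' lvc lec lD D0)
    have ev1: "eventually (\<lambda>s. (s^4 * (s*V s$1 + h*e s$1) + s^2*be s*h*(s*V s$2 + h*e s$2)) / D s = (s *\<^sub>R V1 s) $ 1) F"
      using eventually_conj[OF eventually_conj[OF pos Dpos] comps] by eventually_elim (simp add: field_simps power_numeral_reduce)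
    have ev2: "eventually (\<lambda>s. (s^4 * (s*V s$2 + h*e s$2) - s^2*be s*h*(s*V s$1 + h*e s$1)) / D s = (s *\<^sub>R V1 s) $ 2) F"
      using eventually_conj[OF eventually_conj[OF pos Dpos] comps] by eventually_elim (simp add: field_simps power_numeral_reduce)
    have "((\<lambda>s. (s *\<^sub>R V1 s) $ 1) \<longlongrightarrow> (0::real^2) $ 1) F"
      using tendsto_cong[OF ev1] L1 by simp
    moreover have "((\<lambda>s. (s *\<^sub>R V1 s) $ 2) \<longlongrightarrow> (0::real^2) $ 2) F"
      using tendsto_cong[OF ev2] L2 by simp
    ultimately show "((\<lambda>s. (s *\<^sub>R V1 s) $ i) \<longlongrightarrow> (0::real^2) $ i) F"
      using exhaust_2[of i] by auto
  qed
qed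
theorem proposition3p2:
  fixes E :: "real \<Rightarrow> real^2 \<Rightarrow> real^2"
    and b :: "real \<Rightarrow> real^2 \<Rightarrow> real"
    and dt T :: real
    and x v x1 v1 x2 v2 :: "real \<Rightarrow> nat \<Rightarrow> real^2"
    and y :: "nat \<Rightarrow> real^2"
    and y0 :: "real^2"
  assumes contE: "continuous_on ({0..} \<times> UNIV) (\<lambda>(t, z). E t z)"
    and contb: "continuous_on ({0..} \<times> UNIV) (\<lambda>(t, z). b t z)"
    and b_nz: "\<And>t z. t \<ge> 0 \<Longrightarrow> b t z \<noteq> 0"
    and dt_pos: "dt > 0" and T_pos: "T > 0"
    and stage1_x: "\<And>eps n. eps > 0 \<Longrightarrow> n < nat \<lfloor>T / dt\<rfloor> \<Longrightarrow>
       x1 eps n = x eps n + (dt / (2 * eps)) *\<^sub>R v1 eps n"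
    and stage1_v: "\<And>eps n. eps > 0 \<Longrightarrow> n < nat \<lfloor>T / dt\<rfloor> \<Longrightarrow>
       v1 eps n = v eps n + (dt / (2 * eps)) *\<^sub>R
         (wedgeB ((1 / eps) *\<^sub>R v1 eps n) (b (real n * dt) (x eps n))
          + E (real n * dt) (x eps n))"
    and stage2_x: "\<And>eps n. eps > 0 \<Longrightarrow> n < nat \<lfloor>T / dt\<rfloor> \<Longrightarrow>
       x2 eps n = x eps n + (dt / (2 * eps)) *\<^sub>R v2 eps n"
    and stage2_v: "\<And>eps n. eps > 0 \<Longrightarrow> n < nat \<lfloor>T / dt\<rfloor> \<Longrightarrow>
       v2 eps n = v eps n + (dt / (2 * eps)) *\<^sub>R
         (wedgeB ((1 / eps) *\<^sub>R v2 eps n)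
             (b (real (Suc n) * dt) (2 *\<^sub>R x1 eps n - x eps n))
          + E (real (Suc n) * dt) (2 *\<^sub>R x1 eps n - x eps n))"
    and step_x: "\<And>eps n. eps > 0 \<Longrightarrow> n < nat \<lfloor>T / dt\<rfloor> \<Longrightarrow>
       x eps (Suc n) = x1 eps n + x2 eps n - x eps n"
    and step_v: "\<And>eps n. eps > 0 \<Longrightarrow> n < nat \<lfloor>T / dt\<rfloor> \<Longrightarrow>
       v eps (Suc n) = v1 eps n + v2 eps n - v eps n"
    and bounded: "\<And>n. 1 \<le> n \<Longrightarrow> n \<le> nat \<lfloor>T / dt\<rfloor> \<Longrightarrow>
       \<exists>C. \<forall>eps>0. norm (x eps n) \<le> C \<and> norm (eps *\<^sub>R v eps n) \<le> C"
    and init_x: "((\<lambda>eps. x eps 0) \<longlongrightarrow> y0) (at_right 0)"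
    and init_v: "((\<lambda>eps. eps *\<^sub>R v eps 0) \<longlongrightarrow> 0) (at_right 0)"
    and y_0: "y 0 = y0"
    and y_step: "\<And>n. n < nat \<lfloor>T / dt\<rfloor> \<Longrightarrow>
       y (Suc n) =
         (let ya = y n + (dt / 2) *\<^sub>R drift E b (real n * dt) (y n);
              yb = y n + (dt / 2) *\<^sub>R drift E b (real (Suc n) * dt) (2 *\<^sub>R ya - y n)
          in ya + yb - y n)"
  shows "\<forall>n \<le> nat \<lfloor>T / dt\<rfloor>. ((\<lambda>eps. x eps n) \<longlongrightarrow> y n) (at_right 0)"
proof -
  define N where "N = nat \<lfloor>T / dt\<rfloor>"
  define h where "h = dt / 2"
  have h: "h > 0" using dt_pos h_def by simp
  have hd: "\<And>eps. dt / (2 * eps) = h / eps" unfolding h_def by simp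
  have pos: "eventually (\<lambda>s. s > 0) (at_right (0::real))" by (simp add: eventually_at_filter)
  have cs: "((\<lambda>s. f t (g s)) \<longlongrightarrow> f t z0) (at_right 0)"
    if cf: "continuous_on ({0..} \<times> UNIV) (\<lambda>(t, z). f t z)" and t: "t \<ge> 0"
      and g: "(g \<longlongrightarrow> z0) (at_right 0)" for f :: "real \<Rightarrow> real^2 \<Rightarrow> 'c::topological_space" and t g z0
  proof -
    have "((\<lambda>s. (\<lambda>(t, z). f t z) (t, g s)) \<longlongrightarrow> (\<lambda>(t, z). f t z) (t, z0)) (at_right 0)"
      by (rule continuous_on_tendsto_compose[OF cf tendsto_Pair[OF tendsto_const g]]) (simp_all add: t)
    thus ?thesis by simp
  qed
  have main: "n \<le> N \<Longrightarrow> ((\<lambda>eps. x eps n) \<longlongrightarrow> y n) (at_right 0) \<and>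
      ((\<lambda>eps. eps *\<^sub>R v eps n) \<longlongrightarrow> 0) (at_right 0)" for n
  proof (induction n)
    case 0 then show ?case using init_x init_v y_0 by simp
  next
    case (Suc n)
    hence nN: "n < N" by simp
    from Suc have IHx: "((\<lambda>eps. x eps n) \<longlongrightarrow> y n) (at_right 0)"
      and IHv: "((\<lambda>eps. eps *\<^sub>R v eps n) \<longlongrightarrow> 0) (at_right 0)" by auto
    define t0 where "t0 = real n * dt"
    define t1 where "t1 = real (Suc n) * dt"
    have t0: "t0 \<ge> 0" and t1: "t1 \<ge> 0" using dt_pos t0_def t1_def by auto
    define ya where "ya = y n + h *\<^sub>R drift E b t0 (y n)"
    define yb where "yb = y n + h *\<^sub>R drift E b t1 (2 *\<^sub>R ya - y n)"
    have ys: "y (Suc n) = ya + yb - y n"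
      using y_step[OF nN[unfolded N_def]] unfolding ya_def yb_def h_def t0_def t1_def Let_def by simp
    have eq1: "eventually (\<lambda>s. v1 s n = v s n + (h/s) *\<^sub>R (wedgeB ((1/s) *\<^sub>R v1 s n) (b t0 (x s n)) + E t0 (x s n))) (at_right 0)"
      using pos by eventually_elim (use stage1_v nN N_def hd t0_def in auto)
    note S1 = stage_limit[OF h eq1 cs[OF contb t0 IHx] b_nz[OF t0] cs[OF contE t0 IHx] IHv]
    have X1: "((\<lambda>s. x1 s n) \<longlongrightarrow> ya) (at_right 0)"
    proof -
      have "((\<lambda>s. x s n + (h/s) *\<^sub>R v1 s n) \<longlongrightarrow> ya) (at_right 0)"
        unfolding ya_def drift_def by (intro tendsto_intros IHx S1(1))
      moreover have ev: "eventually (\<lambda>s. x s n + (h/s) *\<^sub>R v1 s n = x1 s n) (at_right 0)"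
        using pos by eventually_elim (use stage1_x nN N_def hd in auto)
      ultimately show ?thesis using tendsto_cong[OF ev] by simp
    qed
    have Z: "((\<lambda>s. 2 *\<^sub>R x1 s n - x s n) \<longlongrightarrow> 2 *\<^sub>R ya - y n) (at_right 0)"
      by (intro tendsto_intros X1 IHx)
    have eq2: "eventually (\<lambda>s. v2 s n = v s n + (h/s) *\<^sub>R (wedgeB ((1/s) *\<^sub>R v2 s n) (b t1 (2 *\<^sub>R x1 s n - x s n)) + E t1 (2 *\<^sub>R x1 s n - x s n))) (at_right 0)"
      using pos by eventually_elim (use stage2_v nN N_def hd t1_def in auto)
    note S2 = stage_limit[OF h eq2 cs[OF contb t1 Z] b_nz[OF t1] cs[OF contE t1 Z] IHv]
    have X2: "((\<lambda>s. x2 s n) \<longlongrightarrow> yb) (at_right 0)"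
    proof -
      have "((\<lambda>s. x s n + (h/s) *\<^sub>R v2 s n) \<longlongrightarrow> yb) (at_right 0)"
        unfolding yb_def drift_def by (intro tendsto_intros IHx S2(1))
      moreover have ev: "eventually (\<lambda>s. x s n + (h/s) *\<^sub>R v2 s n = x2 s n) (at_right 0)"
        using pos by eventually_elim (use stage2_x nN N_def hd in auto)
      ultimately show ?thesis using tendsto_cong[OF ev] by simp
    qed
    have "((\<lambda>s. x1 s n + x2 s n - x s n) \<longlongrightarrow> y (Suc n)) (at_right 0)"
      unfolding ys by (intro tendsto_intros X1 X2 IHx)
    moreover have ev: "eventually (\<lambda>s. x1 s n + x2 s n - x s n = x s (Suc n)) (at_right 0)"
      using pos by eventually_elim (use step_x nN N_def in auto)
    ultimately have A: "((\<lambda>eps. x eps (Suc n)) \<longlongrightarrow> y (Suc n)) (at_right 0)"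
      using tendsto_cong[OF ev] by simp
    have "((\<lambda>s. s *\<^sub>R v1 s n + s *\<^sub>R v2 s n - s *\<^sub>R v s n) \<longlongrightarrow> 0 + 0 - 0) (at_right 0)"
      by (intro tendsto_intros S1(2) S2(2) IHv)
    moreover have ev: "eventually (\<lambda>s. s *\<^sub>R v1 s n + s *\<^sub>R v2 s n - s *\<^sub>R v s n = s *\<^sub>R v s (Suc n)) (at_right 0)"
      using pos proof eventually_elim
        fix s :: real assume "s > 0"
        hence "v s (Suc n) = v1 s n + v2 s n - v s n" using step_v nN N_def by auto
        thus "s *\<^sub>R v1 s n + s *\<^sub>R v2 s n - s *\<^sub>R v s n = s *\<^sub>R v s (Suc n)"
          by (simp add: scaleR_right_diff_distrib scaleR_right_distrib)
      qed
    ultimately have B: "((\<lambda>eps. eps *\<^sub>R v eps (Suc n)) \<longlongrightarrow> 0) (at_right 0)"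
      using tendsto_cong[OF ev] by simp
    show ?case using A B by simp
  qed
  show ?thesis using main N_def by blast
qed

end
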